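(* Let $(a,b,c,\lambda,\delta)\in(\mathbb F^\times)^4\times\mathbb F$ and let $\nu\in\mathbb F^\times$ satisfy $\nu^{d'}+\nu^{-d'}=\delta+a^{d'}\lambda^{-d'}+a^{-d'}\lambda^{d'}$. Put $\vartheta_i=\nu^{-1}q^{2i}+\nu q^{-2i}$. Then the characteristic polynomial of $A$ acting on $W_\lambda^\delta(a,b,c)$ is $\prod_{i=0}^{d'-1}(x-\vartheta_i)$, and this equals $\prod_{i=0}^{d'-1}(x-\theta_i)-\delta$.
   Context: $\mathbb F$ is an algebraically closed field and $q\in\mathbb F^\times$ a root of unity of order $d\notin\{1,2,4\}$; $d'=d$ if $d$ odd, $d'=d/2$ if $d$ even. $\triangle_q$ is the unital associative $\mathbb F$-algebra with generators $A,B,C$ subject to: each of $A+\frac{qBC-q^{-1}CB}{q^2-q^{-2}}$, $B+\frac{qCA-q^{-1}AC}{q^2-q^{-2}}$, $C+\frac{qAB-q^{-1}BA}{q^2-q^{-2}}$ is central; $\alpha,\beta,\gamma$ are these times $q+q^{-1}$. For $(a,b,c,\lambda)\in(\mathbb F^\times)^4$, $i\in\mathbb N$: $\theta_i=a\lambda^{-1}q^{2i}+a^{-1}\lambda q^{-2i}$, $\theta_i^*=b\lambda^{-1}q^{2i}+b^{-1}\lambda q^{-2i}$, $\varphi_i=a^{-1}b^{-1}\lambda q(q^i-q^{-i})(\lambda^{-1}q^{i-1}-\lambda q^{1-i})(q^{-i}-abc\lambda^{-1}q^{i-1})(q^{-i}-abc^{-1}\lambda^{-1}q^{i-1})$. $M_\lambda(a,b,c)$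 has basis $\{m_i\}_{i\in\mathbb N}$, $(A-\theta_i)m_i=m_{i+1}$, $(B-\theta_i^* )m_i=\varphi_im_{i-1}$, $\alpha,\beta,\gamma$ acting as $(b+b^{-1})(c+c^{-1})+(a+a^{-1})(\lambda q+\lambda^{-1}q^{-1})$, $(c+c^{-1})(a+a^{-1})+(b+b^{-1})(\lambda q+\lambda^{-1}q^{-1})$, $(a+a^{-1})(b+b^{-1})+(c+c^{-1})(\lambda q+\lambda^{-1}q^{-1})$. $W_\lambda^\delta(a,b,c)$ is the quotient of $M_\lambda(a,b,c)$ by the span of $\{\delta m_i-m_{d'+i}\}_{i\in\mathbb N}$ (dimension $d'$). *)

theory Defs
  imports "HOL-Computational_Algebra.Polynomial" "Jordan_Normal_Form.Char_Poly"
begin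

definition dprime :: "nat \<Rightarrow> nat" where
  "dprime d = (if odd d then d else d div 2)"

definition theta :: "'a::field \<Rightarrow> 'a \<Rightarrow> 'a \<Rightarrow> nat \<Rightarrow> 'a" where
  "theta q a lam i = a * inverse lam * q ^ (2*i) + inverse a * lam * inverse (q ^ (2*i))"

text \<open>Image of the basis vector m_k of M in W (quotient by span of delta m_i - m_(d'+i)),
  written in coordinates w.r.t. the basis (images of) m_0, ..., m_(d'-1):
  m_k is identified with delta^(k div d') m_(k mod d').\<close>
definition Wcoord :: "nat \<Rightarrow> 'a::field \<Rightarrow> nat \<Rightarrow> nat \<Rightarrow> 'a" where
  "Wcoord n \<delta> k r = (if r = k mod n then \<delta> ^ (k div n) else 0)"

text \<open>Matrix of A acting on W (w.r.t. basis m_0,...,m_(d'-1)), using A m_j = theta_j m_j + m_(j+1).\<close>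
definition A_on_W :: "nat \<Rightarrow> 'a::field \<Rightarrow> 'a \<Rightarrow> 'a \<Rightarrow> 'a \<Rightarrow> 'a mat" where
  "A_on_W n q a lam \<delta> = mat n n (\<lambda>(r, j).
      (if r = j then theta q a lam j else 0) + Wcoord n \<delta> (Suc j) r)"

end

theory Submission
  imports Defs
begin


lemma charmat_entry:
  fixes q a lam \<delta> :: "'a::field"
  assumes n: "n \<ge> 2" and i: "i < n" and j: "j < n"
  shows "char_poly_matrix (A_on_W n q a lam \<delta>) $$ (i,j) =
    (if i = j then [:- theta q a lam j, 1:] else if i = Suc j then [:-1:]
     else if i = 0 \<and> j = n - 1 then [:-\<delta>:] else 0)"
proof -
  have "Suc j < n \<or> Suc j = n" using j by auto
  then show ?thesis
  proof
    assume s: "Suc j < n"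
    then show ?thesis using i j n
      by (auto simp: char_poly_matrix_def A_on_W_def Wcoord_def)
  next
    assume s: "Suc j = n"
    then show ?thesis using i j n
      by (auto simp: char_poly_matrix_def A_on_W_def Wcoord_def)
  qed
qed



lemma char_poly_AW:
  fixes q a lam \<delta> :: "'a::field"
  assumes n: "n \<ge> 2"
  shows "char_poly (A_on_W n q a lam \<delta>) = (\<Prod>i<n. [: - theta q a lam i, 1 :]) - [: \<delta> :]"
proof -
  let ?M = "char_poly_matrix (A_on_W n q a lam \<delta>)"
  let ?f = "\<lambda>i. [: - theta q a lam i, 1 :]"
  have Mc: "?M \<in> carrier_mat n n" by (simp add: A_on_W_def)
  note E = charmat_entry[OF n, where q=q and a=a and lam=lam and \<delta>=\<delta>]
  have n0: "0 < n" using n by auto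
  have "char_poly (A_on_W n q a lam \<delta>) = (\<Sum>j<n. ?M $$ (0,j) * cofactor ?M 0 j)"
    unfolding char_poly_def by (rule laplace_expansion_row[OF Mc n0])
  also have "\<dots> = (\<Sum>j\<in>{0, n-1}. ?M $$ (0,j) * cofactor ?M 0 j)"
  proof (rule sum.mono_neutral_right)
    show "\<forall>j\<in>{..<n} - {0, n - 1}. ?M $$ (0, j) * cofactor ?M 0 j = 0"
    proof
      fix j assume j: "j \<in> {..<n} - {0, n - 1}"
      then have "?M $$ (0, j) = 0" using E[of 0 j] n0 by auto
      then show "?M $$ (0, j) * cofactor ?M 0 j = 0" by simp
    qed
  qed (use n in auto)
  also have "\<dots> = ?M $$ (0,0) * cofactor ?M 0 0 + ?M $$ (0,n-1) * cofactor ?M 0 (n-1)"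
    using n by simp
  also have "?M $$ (0,0) = ?f 0" using E[of 0 0] n by simp
  also have "?M $$ (0,n-1) = [:-\<delta>:]" using E[of 0 "n-1"] n by simp
  also have "cofactor ?M 0 0 = (\<Prod>i<n-1. ?f (Suc i))"
  proof -
    let ?D = "mat_delete ?M 0 0"
    have Dc: "?D \<in> carrier_mat (n-1) (n-1)" using mat_delete_carrier[OF Mc] .
    have De: "?D $$ (i,j) = ?M $$ (Suc i, Suc j)" if "i < n-1" "j < n-1" for i j
      using that Mc by (simp add: mat_delete_def)
    have lt: "?D $$ (i,j) = 0" if "i < j" "j < n-1" for i j
      using De[of i j] E[of "Suc i" "Suc j"] that by auto
    have "det ?D = prod_list (diag_mat ?D)"
      by (rule det_lower_triangular[OF lt Dc])
    also have "\<dots> = (\<Prod>i<n-1. ?D $$ (i,i))"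
      unfolding diag_mat_def using Dc Mc
      by (simp add: prod.distinct_set_conv_list[symmetric] atLeast0LessThan)
    also have "\<dots> = (\<Prod>i<n-1. ?f (Suc i))"
    proof (rule prod.cong[OF refl])
      fix i assume "i \<in> {..<n-1}"
      then show "?D $$ (i,i) = ?f (Suc i)" using De[of i i] E[of "Suc i" "Suc i"] by auto
    qed
    finally show ?thesis by (simp add: cofactor_def)
  qed
  also have "cofactor ?M 0 (n-1) = (-1)^(n-1) * [:-1:]^(n-1)"
  proof -
    let ?D = "mat_delete ?M 0 (n-1)"
    have Dc: "?D \<in> carrier_mat (n-1) (n-1)" using mat_delete_carrier[OF Mc] .
    have De: "?D $$ (i,j) = ?M $$ (Suc i, j)" if "i < n-1" "j < n-1" for i j
      using that Mc by (simp add: mat_delete_def)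
    have ut: "upper_triangular ?D"
    proof -
      have "?D $$ (i,j) = 0" if "i < n-1" "j < i" for i j
        using De[of i j] E[of "Suc i" j] that by auto
      then show ?thesis unfolding upper_triangular_def using Dc by auto
    qed
    have "det ?D = prod_list (diag_mat ?D)"
      by (rule det_upper_triangular[OF ut Dc])
    also have "\<dots> = (\<Prod>i<n-1. ?D $$ (i,i))"
      unfolding diag_mat_def using Dc Mc
      by (simp add: prod.distinct_set_conv_list[symmetric] atLeast0LessThan)
    also have "\<dots> = (\<Prod>i<n-1. [:-1:])"
    proof (rule prod.cong[OF refl])
      fix i assume "i \<in> {..<n-1}"
      then show "?D $$ (i,i) = [:-1:]" using De[of i i] E[of "Suc i" "i"] by auto
    qed
    finally show ?thesis by (simp add: cofactor_def)
  qed
  also have "?f 0 * (\<Prod>i<n-1. ?f (Suc i)) = (\<Prod>i<n. ?f i)"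
    using n prod.lessThan_Suc_shift[of ?f "n-1"] by simp
  also have "[:-\<delta>:] * ((-1)^(n-1) * [:-1:]^(n-1)) = - [:\<delta>:]"
  proof -
    have "[:-1:] = (-1 :: 'a poly)" by (simp add: one_pCons)
    then have "(-1)^(n-1) * [:-1:]^(n-1) = ((-1) * (-1 :: 'a poly))^(n-1)"
      by (simp add: power_mult_distrib)
    then show ?thesis by simp
  qed
  finally show ?thesis by simp
qed



lemma prod_roots_unity:
  fixes Q u t :: "'a::field"
  assumes n: "n > 0" and Qn: "Q ^ n = 1" and Qk: "\<forall>k. 0 < k \<and> k < n \<longrightarrow> Q ^ k \<noteq> 1"
  shows "(\<Prod>i<n. t - u * Q ^ i) = t ^ n - u ^ n"
proof (cases "u = 0")
  case True
  then show ?thesis using n by simp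
next
  case u: False
  define p where "p = (\<Prod>i<n. [: - (u * Q ^ i), 1 :])"
  define r where "r = monom 1 n - [: u ^ n :]"
  have degp: "degree p = n" unfolding p_def
    by (subst degree_prod_eq_sum_degree) auto
  have lcp: "lead_coeff p = 1" unfolding p_def lead_coeff_prod by simp
  have cr: "coeff r n = 1" using n by (cases n) (auto simp: r_def coeff_monom)
  have degr: "degree r \<le> n" unfolding r_def
    by (rule degree_diff_le) (auto simp: degree_monom_le)
  have Q0: "Q \<noteq> 0" using Qn n by (metis power_0_left zero_neq_one not_gr0)
  have inj: "inj_on (\<lambda>i. u * Q ^ i) {..<n}"
  proof (rule inj_onI)
    fix i j assume i: "i \<in> {..<n}" and j: "j \<in> {..<n}" and e: "u * Q ^ i = u * Q ^ j"
    have e': "Q ^ i = Q ^ j" using e u by simp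
    show "i = j"
    proof (rule ccontr)
      assume "i \<noteq> j"
      then consider "i < j" | "j < i" by linarith
      then show False
      proof cases
        case 1
        have "Q ^ j = Q ^ i * Q ^ (j - i)" using 1 by (simp add: power_add[symmetric])
        then have "Q ^ (j - i) = 1" using e' Q0 by simp
        then show False using Qk 1 j by auto
      next
        case 2
        have "Q ^ i = Q ^ j * Q ^ (i - j)" using 2 by (simp add: power_add[symmetric])
        then have "Q ^ (i - j) = 1" using e' Q0 by simp
        then show False using Qk 2 i by auto
      qed
    qed
  qed
  have "p = r"
  proof (rule poly_eqI_degree_lead_coeff[where n = n and A = "(\<lambda>i. u * Q ^ i) ` {..<n}"])
    show "coeff p n = coeff r n" using lcp degp cr by simp
    show "n \<le> card ((\<lambda>i. u * Q ^ i) ` {..<n})" using card_image[OF inj] by simp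
    show "degree p \<le> n" using degp by simp
    show "degree r \<le> n" by (rule degr)
    fix z assume "z \<in> (\<lambda>i. u * Q ^ i) ` {..<n}"
    then obtain k where k: "k < n" "z = u * Q ^ k" by auto
    have "poly p z = 0" unfolding p_def poly_prod
      using k by (intro prod_zero) auto
    moreover have "poly r z = 0"
    proof -
      have "z ^ n = u ^ n * (Q ^ n) ^ k"
        using k by (simp add: power_mult_distrib power_mult[symmetric] mult.commute)
      then show ?thesis using Qn by (simp add: r_def poly_monom)
    qed
    ultimately show "poly p z = poly r z" by simp
  qed
  then have "poly p t = poly r t" by simp
  then show ?thesis by (simp add: p_def r_def poly_prod poly_monom)
qed



lemma G_eval:
  fixes Q u t :: "'a::field"
  assumes n: "n > 0" and Qn: "Q ^ n = 1" and Qk: "\<forall>k. 0 < k \<and> k < n \<longrightarrow> Q ^ k \<noteq> 1"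
    and u: "u \<noteq> 0" and t: "t \<noteq> 0"
  shows "(\<Prod>i<n. (t + inverse t) - (u * Q ^ i + inverse u * inverse (Q ^ i)))
       = t ^ n + inverse (t ^ n) - (u ^ n + inverse (u ^ n))"
proof -
  have Q0: "Q \<noteq> 0" using Qn n by (metis power_0_left zero_neq_one not_gr0)
  have Qn': "inverse Q ^ n = 1" using Qn by (simp add: power_inverse)
  have Qk': "\<forall>k. 0 < k \<and> k < n \<longrightarrow> inverse Q ^ k \<noteq> 1" using Qk by (simp add: power_inverse)
  have f: "(t + inverse t) - (u * Q ^ i + inverse u * inverse (Q ^ i))
        = inverse t * ((t - u * Q ^ i) * (t - inverse u * inverse Q ^ i))" for i
    using u t Q0 by (simp add: field_simps power_inverse)
  have "(\<Prod>i<n. (t + inverse t) - (u * Q ^ i + inverse u * inverse (Q ^ i)))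
      = inverse t ^ n * ((\<Prod>i<n. t - u * Q ^ i) * (\<Prod>i<n. t - inverse u * inverse Q ^ i))"
    unfolding f by (simp add: prod.distrib)
  also have "\<dots> = inverse t ^ n * ((t ^ n - u ^ n) * (t ^ n - inverse u ^ n))"
    using prod_roots_unity[OF n Qn Qk] prod_roots_unity[OF n Qn' Qk'] by simp
  also have "\<dots> = t ^ n + inverse (t ^ n) - (u ^ n + inverse (u ^ n))"
    using u t by (simp add: field_simps power_inverse)
  finally show ?thesis .
qed

lemma alg_closed_infinite:
  assumes alg_closed: "\<forall>p :: 'a::field poly. degree p \<ge> 1 \<longrightarrow> (\<exists>x. poly p x = 0)"
  shows "infinite (UNIV :: 'a set)"
proof
  assume fin: "finite (UNIV :: 'a set)"
  define p :: "'a poly" where "p = (\<Prod>e\<in>UNIV. [:-e, 1:]) + 1"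
  have dg: "degree (\<Prod>e\<in>(UNIV::'a set). [:-e, 1:]) = card (UNIV :: 'a set)"
    by (subst degree_prod_eq_sum_degree) auto
  have "card (UNIV :: 'a set) \<ge> 1" using fin by (simp add: Suc_le_eq card_gt_0_iff)
  then have "degree p \<ge> 1" unfolding p_def using dg
    by (subst degree_add_eq_left) auto
  then obtain x where "poly p x = 0" using alg_closed by blast
  moreover have "(\<Prod>e\<in>UNIV. poly [:-e, 1:] x) = 0"
    using fin by (intro prod_zero) (auto intro!: bexI[where x=x])
  then have "poly p x = 1" unfolding p_def poly_add poly_prod by simp
  ultimately show False by simp
qed

lemma poly_eq_infinite:
  fixes p r :: "'a::field poly"
  assumes inf: "infinite (UNIV :: 'a set)" and e: "\<And>x. poly p x = poly r x"
  shows "p = r"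
proof (rule ccontr)
  assume "p \<noteq> r"
  then have "p - r \<noteq> 0" by simp
  then have "finite {x. poly (p - r) x = 0}" by (rule poly_roots_finite)
  moreover have "{x. poly (p - r) x = 0} = UNIV" using e by auto
  ultimately show False using inf by simp
qed


theorem lemma8p3:
  fixes q a b c lam \<delta> \<nu> :: "'a::field"
    and d :: nat
  assumes alg_closed: "\<forall>p :: 'a poly. degree p \<ge> 1 \<longrightarrow> (\<exists>x. poly p x = 0)"
    and q_root: "d > 0" "q ^ d = 1" "\<forall>k. 0 < k \<and> k < d \<longrightarrow> q ^ k \<noteq> 1"
    and d_ne: "d \<notin> {1, 2, 4}"
    and nz: "a \<noteq> 0" "b \<noteq> 0" "c \<noteq> 0" "lam \<noteq> 0" "\<nu> \<noteq> 0"
    and nu_eq: "\<nu> ^ dprime d + inverse (\<nu> ^ dprime d)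
                 = \<delta> + a ^ dprime d * inverse (lam ^ dprime d) + inverse (a ^ dprime d) * lam ^ dprime d"
  shows "char_poly (A_on_W (dprime d) q a lam \<delta>)
           = (\<Prod>i<dprime d. [: - (inverse \<nu> * q ^ (2*i) + \<nu> * inverse (q ^ (2*i))), 1 :])
       \<and> (\<Prod>i<dprime d. [: - (inverse \<nu> * q ^ (2*i) + \<nu> * inverse (q ^ (2*i))), 1 :])
           = (\<Prod>i<dprime d. [: - theta q a lam i, 1 :]) - [: \<delta> :]"
proof -
  define n where "n = dprime d"
  define Q where "Q = q ^ 2"
  have qm: "q ^ m \<noteq> 1" if "0 < m" "m < d" for m using q_root(3) that by auto
  have n2: "n \<ge> 2"
  proof (cases "odd d")
    case True
    then have "d \<noteq> 1" using d_ne by auto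
    then have "d \<ge> 3" using True q_root(1) by presburger
    then show ?thesis using True by (simp add: n_def dprime_def)
  next
    case False
    have "d \<noteq> 2" using d_ne by auto
    then have "d \<ge> 4" using False q_root(1) by presburger
    then show ?thesis using False by (simp add: n_def dprime_def)
  qed
  have n0: "n > 0" using n2 by simp
  have Qn: "Q ^ n = 1"
  proof (cases "odd d")
    case True
    then have "Q ^ n = (q ^ d) ^ 2" by (simp add: Q_def n_def dprime_def power_mult[symmetric] mult.commute)
    then show ?thesis using q_root(2) by simp
  next
    case False
    then have "2 * (d div 2) = d" by simp
    then have "Q ^ n = q ^ d" by (simp add: Q_def n_def dprime_def False power_mult[symmetric])
    then show ?thesis using q_root(2) by simp
  qed
  have Qk: "\<forall>k. 0 < k \<and> k < n \<longrightarrow> Q ^ k \<noteq> 1"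
  proof (intro allI impI)
    fix k assume k: "0 < k \<and> k < n"
    have Qq: "Q ^ k = q ^ (2 * k)" by (simp add: Q_def power_mult)
    show "Q ^ k \<noteq> 1"
    proof (cases "odd d")
      case True
      then have kd: "k < d" using k by (simp add: n_def dprime_def)
      show ?thesis
      proof (cases "2 * k < d")
        case True
        then show ?thesis using qm[of "2*k"] k Qq by simp
      next
        case False
        then have "2 * k \<noteq> d" using \<open>odd d\<close> by auto
        then have m: "0 < 2 * k - d" "2 * k - d < d" using False kd by auto
        have "q ^ (2 * k) = q ^ d * q ^ (2 * k - d)" using False by (simp add: power_add[symmetric])
        then have "q ^ (2 * k) = q ^ (2 * k - d)" using q_root(2) by simp
        then show ?thesis using qm[OF m] Qq by simp
      qed
    next
      case False
      then have "2 * k < d" using k by (simp add: n_def dprime_def) presburger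
      then show ?thesis using qm[of "2*k"] k Qq by simp
    qed
  qed
  have inf: "infinite (UNIV :: 'a set)" by (rule alg_closed_infinite[OF alg_closed])
  have q2: "q ^ (2 * i) = Q ^ i" for i by (simp add: Q_def power_mult)
  have thq: "theta q a lam i = (a * inverse lam) * Q ^ i + inverse (a * inverse lam) * inverse (Q ^ i)" for i
    using nz by (simp add: theta_def q2)
  have P: "(\<Prod>i<n. [: - (inverse \<nu> * q ^ (2*i) + \<nu> * inverse (q ^ (2*i))), 1 :])
           = (\<Prod>i<n. [: - theta q a lam i, 1 :]) - [: \<delta> :]"
  proof (rule poly_eq_infinite[OF inf])
    fix x :: 'a
    have "degree [:1, -x, 1:] \<ge> 1" by simp
    then obtain t where t: "poly [:1, -x, 1:] t = 0" using alg_closed by blast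
    have t0: "t \<noteq> 0" using t by auto
    have xt: "x = t + inverse t"
    proof -
      have "1 - x * t + t * t = 0" using t by (simp add: algebra_simps)
      then have "x * t = t * t + 1" by (simp add: algebra_simps)
      then show ?thesis using t0 by (simp add: field_simps)
    qed
    have "poly (\<Prod>i<n. [: - (inverse \<nu> * q ^ (2*i) + \<nu> * inverse (q ^ (2*i))), 1 :]) x
        = (\<Prod>i<n. (t + inverse t) - (inverse \<nu> * Q ^ i + inverse (inverse \<nu>) * inverse (Q ^ i)))"
      unfolding poly_prod q2 by (rule prod.cong) (simp_all add: xt algebra_simps)
    also have "\<dots> = t ^ n + inverse (t ^ n) - (inverse \<nu> ^ n + inverse (inverse \<nu> ^ n))"
      by (rule G_eval[OF n0 Qn Qk]) (use nz t0 in auto)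
    finally have L: "poly (\<Prod>i<n. [: - (inverse \<nu> * q ^ (2*i) + \<nu> * inverse (q ^ (2*i))), 1 :]) x
        = t ^ n + inverse (t ^ n) - (inverse \<nu> ^ n + inverse (inverse \<nu> ^ n))" .
    have "poly ((\<Prod>i<n. [: - theta q a lam i, 1 :]) - [: \<delta> :]) x
        = (\<Prod>i<n. (t + inverse t) - ((a * inverse lam) * Q ^ i + inverse (a * inverse lam) * inverse (Q ^ i))) - \<delta>"
      unfolding poly_diff poly_prod by (simp add: xt thq algebra_simps)
    also have "\<dots> = t ^ n + inverse (t ^ n) - ((a * inverse lam) ^ n + inverse ((a * inverse lam) ^ n)) - \<delta>"
      by (subst G_eval[OF n0 Qn Qk]) (use nz t0 in auto)
    finally have R: "poly ((\<Prod>i<n. [: - theta q a lam i, 1 :]) - [: \<delta> :]) x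
        = t ^ n + inverse (t ^ n) - ((a * inverse lam) ^ n + inverse ((a * inverse lam) ^ n)) - \<delta>" .
    have nu': "\<nu> ^ n + inverse (\<nu> ^ n) = \<delta> + (a * inverse lam) ^ n + inverse ((a * inverse lam) ^ n)"
      using nu_eq nz by (simp add: n_def power_mult_distrib power_inverse mult.commute)
    show "poly (\<Prod>i<n. [: - (inverse \<nu> * q ^ (2*i) + \<nu> * inverse (q ^ (2*i))), 1 :]) x
        = poly ((\<Prod>i<n. [: - theta q a lam i, 1 :]) - [: \<delta> :]) x"
      unfolding L R using nu' by (simp add: power_inverse algebra_simps)
  qed
  have C: "char_poly (A_on_W n q a lam \<delta>) = (\<Prod>i<n. [: - theta q a lam i, 1 :]) - [: \<delta> :]"
    by (rule char_poly_AW[OF n2])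
  show ?thesis using P C unfolding n_def by simp
qed

end
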